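(* For every $\varepsilon\in(0,1]$ there exists $n_0$ such that for every $n\geq n_0$ the following holds. Let $G$ be an $(n,\varepsilon)$-digraph, let $\mathbf{x}$ be a perfect fractional matching of $G$ which is $b$-normal for some $b\geq1$, and let $(Z_t)_{t\in\mathbb{N}_0}$ be a random walk on $G$ induced by $\mathbf{x}$ following the pattern of an oriented path $L=(y_t)_{t\in\mathbb{N}_0}$. Then for every vertex $v\in V(G)$ and every $t\geq5+4b^2\varepsilon^{-1}\log b$, $\mathbb{P}[Z_t=v]=(1\pm e^{-\frac{\varepsilon}{2b^2}t})\frac1n$.
   Context: $\log=\log_2$; $a=(1\pm\delta)\beta$ means $(1-\delta)\beta\leq a\leq(1+\delta)\beta$. Digraphs have no loops and at most one edge from $v$ to $w$ per ordered pair. An $(n,\varepsilon)$-digraph is a digraph on $n$ vertices with every in- and out-degree at least $(\frac12+\varepsilon)n$. A perfect fractional matching of $G$ is $\mathbf{x}\colon E(G)\to\mathbb{R}_{\geq0}$ with $\sum_{w\in N^+(v)}\mathbf{x}_{vw}=1=\sum_{w\in N^-(v)}\mathbf{x}_{wv}$ for all $v$; it is $b$-normal if $\frac1{bn}\leq\mathbf{x}_e\leq\frac bn$ for all $e$. $L=(y_t)_{t\in\mathbb{N}_0}$ is an oriented path (not a subgraph of $G$) whose consecutive vertices $y_t,y_{t+1}$ are joined by exactly one of the edges $y_ty_{t+1}$, $y_{t+1}y_t$. The random walk on $G$ induced by $\mathbf{x}$ following the pattern of $L$ is a Markov chain $(Z_t)$ on $V(G)$ (with arbitrary initial state/distribution)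 with $\mathbb{P}[Z_{t+1}=w\mid Z_t=v]=\mathbf{x}_{vw}$ if $y_ty_{t+1}\in E(L)$ and $vw\in E(G)$, $=\mathbf{x}_{wv}$ if $y_{t+1}y_t\in E(L)$ and $wv\in E(G)$, and $=0$ otherwise. *)

theory Defs
  imports Complex_Main
begin

definition out_nbrs :: "(nat \<times> nat) set \<Rightarrow> nat \<Rightarrow> nat set" where
  "out_nbrs E v = {w. (v, w) \<in> E}"

definition in_nbrs :: "(nat \<times> nat) set \<Rightarrow> nat \<Rightarrow> nat set" where
  "in_nbrs E v = {w. (w, v) \<in> E}"

definition is_digraph :: "nat \<Rightarrow> (nat \<times> nat) set \<Rightarrow> bool" where
  "is_digraph n E \<longleftrightarrow> E \<subseteq> {0..<n} \<times> {0..<n} \<and> (\<forall>v. (v, v) \<notin> E)"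

definition n_eps_digraph :: "nat \<Rightarrow> real \<Rightarrow> (nat \<times> nat) set \<Rightarrow> bool" where
  "n_eps_digraph n eps E \<longleftrightarrow> is_digraph n E \<and>
     (\<forall>v \<in> {0..<n}. real (card (out_nbrs E v)) \<ge> (1/2 + eps) * real n \<and>
                     real (card (in_nbrs E v)) \<ge> (1/2 + eps) * real n)"

definition perfect_fractional_matching ::
  "nat \<Rightarrow> (nat \<times> nat) set \<Rightarrow> (nat \<times> nat \<Rightarrow> real) \<Rightarrow> bool" where
  "perfect_fractional_matching n E x \<longleftrightarrow>
     (\<forall>e \<in> E. x e \<ge> 0) \<and>
     (\<forall>v \<in> {0..<n}. (\<Sum>w \<in> out_nbrs E v. x (v, w)) = 1 \<and> (\<Sum>w \<in> in_nbrs E v. x (w, v)) = 1)"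

definition b_normal :: "nat \<Rightarrow> (nat \<times> nat) set \<Rightarrow> real \<Rightarrow> (nat \<times> nat \<Rightarrow> real) \<Rightarrow> bool" where
  "b_normal n E b x \<longleftrightarrow> (\<forall>e \<in> E. 1 / (b * real n) \<le> x e \<and> x e \<le> b / real n)"

text \<open>An oriented path L = (y_t) is encoded by its pattern fwd :: nat => bool, where
  fwd t holds iff the edge between y_t and y_{t+1} is y_t y_{t+1} (forward), and otherwise
  it is y_{t+1} y_t.\<close>
definition walk_trans ::
  "(nat \<times> nat) set \<Rightarrow> (nat \<times> nat \<Rightarrow> real) \<Rightarrow> (nat \<Rightarrow> bool) \<Rightarrow> nat \<Rightarrow> nat \<Rightarrow> nat \<Rightarrow> real" where
  "walk_trans E x fwd t v w =
     (if fwd t then (if (v, w) \<in> E then x (v, w) else 0)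
      else (if (w, v) \<in> E then x (w, v) else 0))"

text \<open>Marginal law of the Markov chain: walk_dist n E x fwd p0 t v = P[Z_t = v],
  for initial distribution p0 on {0..<n}.\<close>
fun walk_dist ::
  "nat \<Rightarrow> (nat \<times> nat) set \<Rightarrow> (nat \<times> nat \<Rightarrow> real) \<Rightarrow> (nat \<Rightarrow> bool) \<Rightarrow> (nat \<Rightarrow> real) \<Rightarrow> nat \<Rightarrow> nat \<Rightarrow> real" where
  "walk_dist n E x fwd p0 0 v = p0 v"
| "walk_dist n E x fwd p0 (Suc t) w =
     (\<Sum>v \<in> {0..<n}. walk_dist n E x fwd p0 t v * walk_trans E x fwd t v w)"

definition prob_dist_on :: "nat \<Rightarrow> (nat \<Rightarrow> real) \<Rightarrow> bool" where
  "prob_dist_on n p \<longleftrightarrow> (\<forall>v. p v \<ge> 0) \<and> (\<forall>v. v \<ge> n \<longrightarrow> p v = 0) \<and> (\<Sum>v \<in> {0..<n}. p v) = 1"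

end

theory Submission
  imports Defs
begin

lemma step_bound:
  fixes P :: "nat \<Rightarrow> nat \<Rightarrow> real" and p :: "nat \<Rightarrow> real"
  assumes n: "n > 0"
    and colsum: "\<And>w. w < n \<Longrightarrow> (\<Sum>v\<in>{0..<n}. P v w) = 1"
    and low: "\<And>v w. v < n \<Longrightarrow> w < n \<Longrightarrow> P v w \<ge> c / real n"
    and psum: "(\<Sum>v\<in>{0..<n}. p v) = 1"
    and bd: "\<And>v. v < n \<Longrightarrow> \<bar>p v - 1 / real n\<bar> \<le> D"
    and w: "w < n"
  shows "\<bar>(\<Sum>v\<in>{0..<n}. p v * P v w) - 1 / real n\<bar> \<le> (1 - c) * D"
proof -
  have s0: "(\<Sum>v\<in>{0..<n}. p v - 1 / real n) = 0"
    using psum n by (simp add: sum_subtractf)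
  have e1: "(\<Sum>v\<in>{0..<n}. p v * P v w) - 1 / real n
      = (\<Sum>v\<in>{0..<n}. (p v - 1 / real n) * P v w)"
    using colsum[OF w] by (simp add: algebra_simps sum_subtractf sum_distrib_left[symmetric] sum_divide_distrib[symmetric])
  also have "\<dots> = (\<Sum>v\<in>{0..<n}. (p v - 1 / real n) * (P v w - c / real n))
      + (c / real n) * (\<Sum>v\<in>{0..<n}. p v - 1 / real n)"
    by (simp add: algebra_simps sum.distrib sum_distrib_left sum_subtractf)
  also have "\<dots> = (\<Sum>v\<in>{0..<n}. (p v - 1 / real n) * (P v w - c / real n))"
    using s0 by simp
  finally have e: "(\<Sum>v\<in>{0..<n}. p v * P v w) - 1 / real n
      = (\<Sum>v\<in>{0..<n}. (p v - 1 / real n) * (P v w - c / real n))" .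
  have "\<bar>\<Sum>v\<in>{0..<n}. (p v - 1 / real n) * (P v w - c / real n)\<bar>
      \<le> (\<Sum>v\<in>{0..<n}. \<bar>(p v - 1 / real n) * (P v w - c / real n)\<bar>)"
    by (rule sum_abs)
  also have "\<dots> \<le> (\<Sum>v\<in>{0..<n}. D * (P v w - c / real n))"
  proof (rule sum_mono)
    fix v assume "v \<in> {0..<n}"
    then have v: "v < n" by simp
    have "P v w - c / real n \<ge> 0" using low[OF v w] by simp
    then show "\<bar>(p v - 1 / real n) * (P v w - c / real n)\<bar> \<le> D * (P v w - c / real n)"
      using bd[OF v] by (simp add: abs_mult mult_right_mono)
  qed
  also have "\<dots> = D * (1 - c)"
    using colsum[OF w] n by (simp add: sum_distrib_left[symmetric] sum_subtractf)
  finally show ?thesis using e by (simp add: mult.commute)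
qed

lemma card_inter_ge:
  assumes "S1 \<subseteq> {0..<n}" "S2 \<subseteq> {0..<(n::nat)}"
  shows "card S1 + card S2 \<le> card (S1 \<inter> S2) + n"
proof -
  have f: "finite S1" "finite S2" using assms finite_subset by blast+
  have "card (S1 \<union> S2) \<le> n" using assms
    by (metis card_atLeastLessThan card_mono diff_zero finite_atLeastLessThan le_sup_iff)
  then show ?thesis using card_Un_Int[OF f] by linarith
qed

lemma final_ineq:
  fixes eps b :: real and t k :: nat
  assumes eps: "0 < eps" and b: "b \<ge> 1" and kt: "2 * k + 2 \<ge> t"
    and t: "real t \<ge> 5 + 4 * b\<^sup>2 / eps * log 2 b"
    and d: "\<delta> = 2 * eps / b\<^sup>2" and d1: "\<delta> \<le> 1"
  shows "(1 - \<delta>) ^ k * b \<le> exp (- (eps / (2 * b\<^sup>2)) * real t)"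
proof -
  have b2: "b\<^sup>2 > 0" using b by simp
  have lnb: "ln b \<ge> 0" using b by simp
  have "(1 - \<delta>) ^ k \<le> exp (-\<delta>) ^ k"
    apply (rule power_mono) using exp_ge_add_one_self[of "-\<delta>"] d1 by auto
  also have "\<dots> = exp (- \<delta> * real k)"
    by (metis exp_of_nat2_mult mult_minus_left)
  finally have p1: "(1 - \<delta>) ^ k \<le> exp (- \<delta> * real k)" .
  have "log 2 b = ln b / ln 2" by (simp add: log_def)
  moreover have "ln 2 \<le> (1::real)" using ln_le_minus_one[of 2] by simp
  moreover have "ln 2 > (0::real)" by simp
  ultimately have lg: "log 2 b \<ge> ln b" using lnb
    by (simp add: le_divide_eq mult_left_le)
  have "4 * b\<^sup>2 / eps * log 2 b \<ge> 4 * b\<^sup>2 / eps * ln b"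
    using lg b2 eps by (intro mult_left_mono) auto
  then have t1: "real t - 4 \<ge> 4 * b\<^sup>2 / eps * ln b" using t by linarith
  have "ln b \<le> eps * (real t - 4) / (4 * b\<^sup>2)"
  proof -
    have "eps * (real t - 4) \<ge> eps * (4 * b\<^sup>2 / eps * ln b)"
      using t1 eps by (intro mult_left_mono) auto
    also have "eps * (4 * b\<^sup>2 / eps * ln b) = 4 * b\<^sup>2 * ln b" using eps by simp
    finally show ?thesis using b2 by (simp add: le_divide_eq mult.commute)
  qed
  also have "\<dots> \<le> eps * (real t - 4) / (2 * b\<^sup>2)"
  proof -
    have "real t - 4 \<ge> 0" using t1 b2 eps lnb by (smt (verit) divide_nonneg_pos mult_nonneg_nonneg)
    then show ?thesis using eps b2 by (simp add: frac_le)
  qed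
  finally have lnb2: "ln b \<le> eps * (real t - 4) / (2 * b\<^sup>2)" .
  have kk: "real t - 2 \<le> 2 * real k" using kt by linarith
  have "\<delta> * real k = eps * (2 * real k) / b\<^sup>2" using d by simp
  also have "\<dots> \<ge> eps * (real t - 2) / b\<^sup>2"
    using kk eps b2 by (intro divide_right_mono mult_left_mono) auto
  finally have dk: "\<delta> * real k \<ge> eps * (real t - 2) / b\<^sup>2" .
  have "eps * (real t - 2) / b\<^sup>2 = eps * (real t - 4) / (2 * b\<^sup>2) + eps * real t / (2 * b\<^sup>2)"
    using b2 by (simp add: field_simps)
  then have ex: "ln b - \<delta> * real k \<le> - (eps / (2 * b\<^sup>2)) * real t"
    using dk lnb2 by simp
  have "(1 - \<delta>) ^ k * b \<le> exp (- \<delta> * real k) * b"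
    using p1 b by (simp add: mult_right_mono)
  also have "\<dots> = exp (ln b - \<delta> * real k)"
    using b by (simp add: exp_diff exp_minus field_simps)
  also have "\<dots> \<le> exp (- (eps / (2 * b\<^sup>2)) * real t)"
    using ex by simp
  finally show ?thesis .
qed

lemma sum_out:
  assumes "is_digraph n E" "v < n"
  shows "(\<Sum>w\<in>{0..<n}. if (v, w) \<in> E then f w else 0) = (\<Sum>w\<in>out_nbrs E v. f w)"
proof -
  have "{w\<in>{0..<n}. (v, w) \<in> E} = out_nbrs E v"
    using assms unfolding is_digraph_def out_nbrs_def by auto
  then show ?thesis by (metis (no_types) finite_atLeastLessThan sum.inter_filter)
qed

lemma sum_in:
  assumes "is_digraph n E" "w < n"
  shows "(\<Sum>v\<in>{0..<n}. if (v, w) \<in> E then f v else 0) = (\<Sum>v\<in>in_nbrs E w. f v)"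
proof -
  have "{v\<in>{0..<n}. (v, w) \<in> E} = in_nbrs E w"
    using assms unfolding is_digraph_def in_nbrs_def by auto
  then show ?thesis by (metis (no_types) finite_atLeastLessThan sum.inter_filter)
qed

context
  fixes n :: nat and eps b :: real and E :: "(nat \<times> nat) set" and x :: "nat \<times> nat \<Rightarrow> real"
    and fwd :: "nat \<Rightarrow> bool" and p0 :: "nat \<Rightarrow> real"
  assumes G: "n_eps_digraph n eps E" and M: "perfect_fractional_matching n E x"
    and b: "b \<ge> 1" and N: "b_normal n E b x" and D0: "prob_dist_on n p0"
    and n: "n > 0"
begin

abbreviation "P \<equiv> walk_trans E x fwd"
abbreviation "p \<equiv> walk_dist n E x fwd p0"

lemma dg: "is_digraph n E" using G unfolding n_eps_digraph_def by simp

lemma P_nonneg: "P t v w \<ge> 0"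
  using M unfolding walk_trans_def perfect_fractional_matching_def by auto

lemma P_le: "P t v w \<le> b / real n"
  using N b n unfolding walk_trans_def b_normal_def by auto

lemma colsum: "w < n \<Longrightarrow> (\<Sum>v\<in>{0..<n}. P t v w) = 1"
proof (cases "fwd t")
  case True
  assume w: "w < n"
  have "(\<Sum>v\<in>{0..<n}. P t v w) = (\<Sum>v\<in>{0..<n}. if (v, w) \<in> E then x (v, w) else 0)"
    using True by (simp add: walk_trans_def)
  also have "\<dots> = (\<Sum>v\<in>in_nbrs E w. x (v, w))" by (rule sum_in[OF dg w])
  also have "\<dots> = 1" using M w unfolding perfect_fractional_matching_def by auto
  finally show ?thesis .
next
  case False
  assume w: "w < n"
  have "(\<Sum>v\<in>{0..<n}. P t v w) = (\<Sum>v\<in>{0..<n}. if (w, v) \<in> E then x (w, v) else 0)"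
    using False by (simp add: walk_trans_def)
  also have "\<dots> = (\<Sum>v\<in>out_nbrs E w. x (w, v))" by (rule sum_out[OF dg w])
  also have "\<dots> = 1" using M w unfolding perfect_fractional_matching_def by auto
  finally show ?thesis .
qed

lemma rowsum: "v < n \<Longrightarrow> (\<Sum>w\<in>{0..<n}. P t v w) = 1"
proof (cases "fwd t")
  case True
  assume v: "v < n"
  have "(\<Sum>w\<in>{0..<n}. P t v w) = (\<Sum>w\<in>{0..<n}. if (v, w) \<in> E then x (v, w) else 0)"
    using True by (simp add: walk_trans_def)
  also have "\<dots> = (\<Sum>w\<in>out_nbrs E v. x (v, w))" by (rule sum_out[OF dg v])
  also have "\<dots> = 1" using M v unfolding perfect_fractional_matching_def by auto
  finally show ?thesis .
next
  case False
  assume v: "v < n"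
  have "(\<Sum>w\<in>{0..<n}. P t v w) = (\<Sum>w\<in>{0..<n}. if (w, v) \<in> E then x (w, v) else 0)"
    using False by (simp add: walk_trans_def)
  also have "\<dots> = (\<Sum>w\<in>in_nbrs E v. x (w, v))" by (rule sum_in[OF dg v])
  also have "\<dots> = 1" using M v unfolding perfect_fractional_matching_def by auto
  finally show ?thesis .
qed

lemma out_card: "v < n \<Longrightarrow> real (card (out_nbrs E v)) \<ge> (1/2 + eps) * real n"
  using G unfolding n_eps_digraph_def by auto

lemma in_card: "v < n \<Longrightarrow> real (card (in_nbrs E v)) \<ge> (1/2 + eps) * real n"
  using G unfolding n_eps_digraph_def by auto

lemma out_sub: "out_nbrs E v \<subseteq> {0..<n}"
  using dg unfolding is_digraph_def out_nbrs_def by auto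

lemma in_sub: "in_nbrs E v \<subseteq> {0..<n}"
  using dg unfolding is_digraph_def in_nbrs_def by auto

lemma eps_half: "eps \<le> 1/2"
proof -
  have "card (out_nbrs E 0) \<le> n" using out_sub
    by (metis card_atLeastLessThan card_mono diff_zero finite_atLeastLessThan)
  then have "(1/2 + eps) * real n \<le> real n" using out_card[of 0] n by linarith
  then have "(1/2 + eps) * real n \<le> 1 * real n" by simp
  then have "1/2 + eps \<le> 1" using n mult_le_cancel_right_pos[of "real n" "1/2 + eps" 1] by simp
  then show ?thesis by simp
qed

lemma S1_card:
  assumes v: "v < n"
  shows "real (card {u\<in>{0..<n}. P t v u \<ge> 1 / (b * real n)}) \<ge> (1/2 + eps) * real n"
proof (cases "fwd t")
  case True
  have "out_nbrs E v \<subseteq> {u\<in>{0..<n}. P t v u \<ge> 1 / (b * real n)}"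
    using dg N True unfolding is_digraph_def b_normal_def walk_trans_def out_nbrs_def by auto
  then have "card (out_nbrs E v) \<le> card {u\<in>{0..<n}. P t v u \<ge> 1 / (b * real n)}"
    by (intro card_mono) auto
  then show ?thesis using out_card[OF v] by linarith
next
  case False
  have "in_nbrs E v \<subseteq> {u\<in>{0..<n}. P t v u \<ge> 1 / (b * real n)}"
    using dg N False unfolding is_digraph_def b_normal_def walk_trans_def in_nbrs_def by auto
  then have "card (in_nbrs E v) \<le> card {u\<in>{0..<n}. P t v u \<ge> 1 / (b * real n)}"
    by (intro card_mono) auto
  then show ?thesis using in_card[OF v] by linarith
qed

lemma S2_card:
  assumes w: "w < n"
  shows "real (card {u\<in>{0..<n}. P t u w \<ge> 1 / (b * real n)}) \<ge> (1/2 + eps) * real n"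
proof (cases "fwd t")
  case True
  have "in_nbrs E w \<subseteq> {u\<in>{0..<n}. P t u w \<ge> 1 / (b * real n)}"
    using dg N True unfolding is_digraph_def b_normal_def walk_trans_def in_nbrs_def by auto
  then have "card (in_nbrs E w) \<le> card {u\<in>{0..<n}. P t u w \<ge> 1 / (b * real n)}"
    by (intro card_mono) auto
  then show ?thesis using in_card[OF w] by linarith
next
  case False
  have "out_nbrs E w \<subseteq> {u\<in>{0..<n}. P t u w \<ge> 1 / (b * real n)}"
    using dg N False unfolding is_digraph_def b_normal_def walk_trans_def out_nbrs_def by auto
  then have "card (out_nbrs E w) \<le> card {u\<in>{0..<n}. P t u w \<ge> 1 / (b * real n)}"
    by (intro card_mono) auto
  then show ?thesis using out_card[OF w] by linarith
qed

definition "Q t v w = (\<Sum>u\<in>{0..<n}. P t v u * P (Suc t) u w)"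

lemma Q_low:
  assumes v: "v < n" and w: "w < n"
  shows "Q t v w \<ge> (2 * eps / b\<^sup>2) / real n"
proof -
  define S1 where "S1 = {u\<in>{0..<n}. P t v u \<ge> 1 / (b * real n)}"
  define S2 where "S2 = {u\<in>{0..<n}. P (Suc t) u w \<ge> 1 / (b * real n)}"
  have c: "card S1 + card S2 \<le> card (S1 \<inter> S2) + n"
    by (rule card_inter_ge) (auto simp: S1_def S2_def)
  have "real (card S1) + real (card S2) \<ge> 2 * ((1/2 + eps) * real n)"
    using S1_card[OF v, of t] S2_card[OF w, of "Suc t"] unfolding S1_def S2_def by linarith
  have ci2: "real (card (S1 \<inter> S2)) \<ge> 2 * eps * real n"
  proof -
    have "real (card S1 + card S2) \<le> real (card (S1 \<inter> S2) + n)" using c by linarith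
    then show ?thesis using \<open>real (card S1) + real (card S2) \<ge> 2 * ((1/2 + eps) * real n)\<close>
      by (simp add: algebra_simps)
  qed
  have bn: "b * real n > 0" using b n by simp
  have q1: "Q t v w \<ge> (\<Sum>u\<in>S1 \<inter> S2. P t v u * P (Suc t) u w)"
    unfolding Q_def
    by (rule sum_mono2) (auto simp: S1_def S2_def P_nonneg)
  have q2: "(\<Sum>u\<in>S1 \<inter> S2. P t v u * P (Suc t) u w) \<ge> (\<Sum>u\<in>S1 \<inter> S2. (1 / (b * real n)) * (1 / (b * real n)))"
  proof (rule sum_mono)
    fix u assume "u \<in> S1 \<inter> S2"
    then have "P t v u \<ge> 1 / (b * real n)" "P (Suc t) u w \<ge> 1 / (b * real n)"
      by (auto simp: S1_def S2_def)
    then show "(1 / (b * real n)) * (1 / (b * real n)) \<le> P t v u * P (Suc t) u w"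
      using bn P_nonneg[of t v u] by (intro mult_mono) auto
  qed
  have "Q t v w \<ge> real (card (S1 \<inter> S2)) * ((1 / (b * real n)) * (1 / (b * real n)))"
    using q1 q2 by simp
  moreover have "real (card (S1 \<inter> S2)) * ((1 / (b * real n)) * (1 / (b * real n)))
      \<ge> 2 * eps * real n * ((1 / (b * real n)) * (1 / (b * real n)))"
    using ci2 by (intro mult_right_mono) auto
  moreover have "2 * eps * real n * ((1 / (b * real n)) * (1 / (b * real n))) = (2 * eps / b\<^sup>2) / real n"
    using n b by (simp add: field_simps power2_eq_square)
  ultimately show ?thesis by linarith
qed

lemma Q_colsum: "w < n \<Longrightarrow> (\<Sum>v\<in>{0..<n}. Q t v w) = 1"
proof -
  assume w: "w < n"
  have "(\<Sum>v\<in>{0..<n}. Q t v w) = (\<Sum>v\<in>{0..<n}. \<Sum>u\<in>{0..<n}. P t v u * P (Suc t) u w)"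
    unfolding Q_def by simp
  also have "\<dots> = (\<Sum>u\<in>{0..<n}. \<Sum>v\<in>{0..<n}. P t v u * P (Suc t) u w)"
    by (rule sum.swap)
  also have "\<dots> = (\<Sum>u\<in>{0..<n}. (\<Sum>v\<in>{0..<n}. P t v u) * P (Suc t) u w)"
    by (simp only: sum_distrib_right)
  also have "\<dots> = (\<Sum>u\<in>{0..<n}. P (Suc t) u w)"
    by (rule sum.cong) (auto simp: colsum)
  also have "\<dots> = 1" by (rule colsum[OF w])
  finally show ?thesis .
qed

lemma p_two: "p (Suc (Suc t)) w = (\<Sum>v\<in>{0..<n}. p t v * Q t v w)"
proof -
  have "p (Suc (Suc t)) w = (\<Sum>u\<in>{0..<n}. (\<Sum>v\<in>{0..<n}. p t v * P t v u) * P (Suc t) u w)"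
    by simp
  also have "\<dots> = (\<Sum>u\<in>{0..<n}. \<Sum>v\<in>{0..<n}. p t v * P t v u * P (Suc t) u w)"
    by (simp only: sum_distrib_right)
  also have "\<dots> = (\<Sum>v\<in>{0..<n}. \<Sum>u\<in>{0..<n}. p t v * P t v u * P (Suc t) u w)"
    by (rule sum.swap)
  also have "\<dots> = (\<Sum>v\<in>{0..<n}. p t v * (\<Sum>u\<in>{0..<n}. P t v u * P (Suc t) u w))"
    by (simp only: sum_distrib_left mult.assoc)
  also have "\<dots> = (\<Sum>v\<in>{0..<n}. p t v * Q t v w)"
    unfolding Q_def ..
  finally show ?thesis .
qed

lemma psum: "(\<Sum>v\<in>{0..<n}. p t v) = 1"
proof (induction t)
  case 0
  then show ?case using D0 by (simp add: prob_dist_on_def)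
next
  case (Suc t)
  have "(\<Sum>w\<in>{0..<n}. p (Suc t) w) = (\<Sum>w\<in>{0..<n}. \<Sum>v\<in>{0..<n}. p t v * P t v w)"
    by simp
  also have "\<dots> = (\<Sum>v\<in>{0..<n}. \<Sum>w\<in>{0..<n}. p t v * P t v w)"
    by (rule sum.swap)
  also have "\<dots> = (\<Sum>v\<in>{0..<n}. p t v * (\<Sum>w\<in>{0..<n}. P t v w))"
    by (simp only: sum_distrib_left)
  also have "\<dots> = (\<Sum>v\<in>{0..<n}. p t v)"
    by (rule sum.cong) (auto simp: rowsum)
  finally show ?case using Suc by simp
qed

lemma p1_bound: "w < n \<Longrightarrow> \<bar>p 1 w - 1 / real n\<bar> \<le> b / real n"
proof -
  assume w: "w < n"
  have "p 1 w = (\<Sum>v\<in>{0..<n}. p0 v * P 0 v w)" by simp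
  moreover have "(\<Sum>v\<in>{0..<n}. p0 v * P 0 v w) \<le> (\<Sum>v\<in>{0..<n}. p0 v * (b / real n))"
    using D0 P_le by (intro sum_mono mult_left_mono) (auto simp: prob_dist_on_def)
  moreover have "(\<Sum>v\<in>{0..<n}. p0 v * (b / real n)) = b / real n"
    using D0 sum_distrib_right[of p0 "{0..<n}" "b / real n", symmetric] by (simp add: prob_dist_on_def)
  moreover have "(\<Sum>v\<in>{0..<n}. p0 v * P 0 v w) \<ge> 0"
    using D0 P_nonneg by (intro sum_nonneg mult_nonneg_nonneg) (auto simp: prob_dist_on_def)
  moreover have "1 / real n \<le> b / real n" using b n by (simp add: divide_right_mono)
  moreover have "0 \<le> 1 / real n" by simp
  ultimately have "p 1 w - 1 / real n \<le> b / real n" "- (p 1 w - 1 / real n) \<le> b / real n"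
    by linarith+
  then show ?thesis by (simp only: abs_le_iff)
qed

lemma odd_bound: "w < n \<Longrightarrow> \<bar>p (Suc (2 * k)) w - 1 / real n\<bar> \<le> (1 - 2 * eps / b\<^sup>2) ^ k * (b / real n)"
proof (induction k arbitrary: w)
  case 0
  then show ?case using p1_bound by simp
next
  case (Suc k)
  have "p (Suc (2 * Suc k)) w = p (Suc (Suc (Suc (2 * k)))) w" by simp
  also have "\<dots> = (\<Sum>v\<in>{0..<n}. p (Suc (2 * k)) v * Q (Suc (2 * k)) v w)" by (rule p_two)
  finally have e: "p (Suc (2 * Suc k)) w = (\<Sum>v\<in>{0..<n}. p (Suc (2 * k)) v * Q (Suc (2 * k)) v w)" .
  have "\<bar>(\<Sum>v\<in>{0..<n}. p (Suc (2 * k)) v * Q (Suc (2 * k)) v w) - 1 / real n\<bar>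
     \<le> (1 - 2 * eps / b\<^sup>2) * ((1 - 2 * eps / b\<^sup>2) ^ k * (b / real n))"
    by (rule step_bound[OF n Q_colsum Q_low psum Suc.IH Suc.prems]) auto
  then show ?case using e by simp
qed

lemma all_bound:
  assumes w: "w < n" and t: "t \<ge> 1"
  shows "\<bar>p t w - 1 / real n\<bar> \<le> (1 - 2 * eps / b\<^sup>2) ^ ((t - 1) div 2) * (b / real n)"
proof -
  define k where "k = (t - 1) div 2"
  have tk: "t = Suc (2 * k) \<or> t = Suc (Suc (2 * k))" using t unfolding k_def by presburger
  show ?thesis
  proof (cases "t = Suc (2 * k)")
    case True
    then show ?thesis using odd_bound[OF w, of k] unfolding k_def by simp
  next
    case False
    then have k: "t = Suc (Suc (2 * k))" using tk by simp
    have "p t w = (\<Sum>v\<in>{0..<n}. p (Suc (2 * k)) v * P (Suc (2 * k)) v w)" using k by simp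
    moreover have "\<bar>(\<Sum>v\<in>{0..<n}. p (Suc (2 * k)) v * P (Suc (2 * k)) v w) - 1 / real n\<bar>
       \<le> (1 - 0) * ((1 - 2 * eps / b\<^sup>2) ^ k * (b / real n))"
      by (rule step_bound[OF n colsum _ psum odd_bound w]) (auto simp: P_nonneg)
    ultimately show ?thesis unfolding k_def by simp
  qed
qed

lemma main_bound:
  assumes w: "w < n" and eps: "eps > 0" and t: "real t \<ge> 5 + 4 * b\<^sup>2 / eps * log 2 b"
  shows "\<bar>p t w - 1 / real n\<bar> \<le> exp (- (eps / (2 * b\<^sup>2)) * real t) / real n"
proof -
  have lb: "log 2 b \<ge> 0" using b by simp
  have "4 * b\<^sup>2 / eps * log 2 b \<ge> 0" using lb eps by simp
  then have t1: "t \<ge> 1" using t by linarith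
  have d1: "2 * eps / b\<^sup>2 \<le> 1"
  proof -
    have "b\<^sup>2 \<ge> 1" using b by (simp add: one_le_power)
    then show ?thesis using eps_half eps by (simp add: divide_le_eq)
  qed
  have kt: "2 * ((t - 1) div 2) + 2 \<ge> t" by linarith
  have f: "(1 - 2 * eps / b\<^sup>2) ^ ((t - 1) div 2) * b \<le> exp (- (eps / (2 * b\<^sup>2)) * real t)"
    by (rule final_ineq[OF eps b kt t refl d1])
  have "\<bar>p t w - 1 / real n\<bar> \<le> (1 - 2 * eps / b\<^sup>2) ^ ((t - 1) div 2) * (b / real n)"
    by (rule all_bound[OF w t1])
  also have "\<dots> = ((1 - 2 * eps / b\<^sup>2) ^ ((t - 1) div 2) * b) / real n" by simp
  also have "\<dots> \<le> exp (- (eps / (2 * b\<^sup>2)) * real t) / real n"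
    using f n by (simp add: divide_right_mono)
  finally show ?thesis .
qed

end

theorem corollary5p4:
  shows "\<forall>eps::real. 0 < eps \<and> eps \<le> 1 \<longrightarrow>
    (\<exists>n0::nat. \<forall>n \<ge> n0. \<forall>E x (b::real) fwd p0.
       n_eps_digraph n eps E \<and> perfect_fractional_matching n E x \<and> b \<ge> 1 \<and> b_normal n E b x
       \<and> prob_dist_on n p0 \<longrightarrow>
       (\<forall>v \<in> {0..<n}. \<forall>t::nat. real t \<ge> 5 + 4 * b\<^sup>2 / eps * log 2 b \<longrightarrow>
          (1 - exp (- (eps / (2 * b\<^sup>2)) * real t)) / real n \<le> walk_dist n E x fwd p0 t v \<and>
          walk_dist n E x fwd p0 t v \<le> (1 + exp (- (eps / (2 * b\<^sup>2)) * real t)) / real n))"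
proof (intro allI impI)
  fix eps :: real
  assume eps: "0 < eps \<and> eps \<le> 1"
  show "\<exists>n0::nat. \<forall>n \<ge> n0. \<forall>E x (b::real) fwd p0.
       n_eps_digraph n eps E \<and> perfect_fractional_matching n E x \<and> b \<ge> 1 \<and> b_normal n E b x
       \<and> prob_dist_on n p0 \<longrightarrow>
       (\<forall>v \<in> {0..<n}. \<forall>t::nat. real t \<ge> 5 + 4 * b\<^sup>2 / eps * log 2 b \<longrightarrow>
          (1 - exp (- (eps / (2 * b\<^sup>2)) * real t)) / real n \<le> walk_dist n E x fwd p0 t v \<and>
          walk_dist n E x fwd p0 t v \<le> (1 + exp (- (eps / (2 * b\<^sup>2)) * real t)) / real n)"
  proof (intro exI[of _ 0] allI impI ballI)
    fix n :: nat and E x and b :: real and fwd p0 v t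
    assume H: "n_eps_digraph n eps E \<and> perfect_fractional_matching n E x \<and> b \<ge> 1 \<and> b_normal n E b x
       \<and> prob_dist_on n p0" and v: "v \<in> {0..<n}" and t: "real t \<ge> 5 + 4 * b\<^sup>2 / eps * log 2 b"
    have n: "n > 0" using v by simp
    have "\<bar>walk_dist n E x fwd p0 t v - 1 / real n\<bar> \<le> exp (- (eps / (2 * b\<^sup>2)) * real t) / real n"
    proof -
      from H have h: "n_eps_digraph n eps E" "perfect_fractional_matching n E x" "b \<ge> 1"
        "b_normal n E b x" "prob_dist_on n p0" by simp_all
      have vn: "v < n" using v by simp
      show ?thesis by (rule main_bound[OF h n vn _ t]) (use eps in simp)
    qed
    then show "(1 - exp (- (eps / (2 * b\<^sup>2)) * real t)) / real n \<le> walk_dist n E x fwd p0 t v \<and>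
          walk_dist n E x fwd p0 t v \<le> (1 + exp (- (eps / (2 * b\<^sup>2)) * real t)) / real n"
      by (simp add: diff_divide_distrib add_divide_distrib abs_le_iff)
  qed
qed

end
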